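(* Let $s,t,z$ be positive integers, $p=\min\{\lfloor\frac{z-1}{ts-t}\rfloor,t-1\}$ (with $p=t-1$ when $s=1$), and let $N_{\text{PolyDot-CMPC}}$ and $N_{\text{GCSA-NA}}$ be as in the context. Then $N_{\text{PolyDot-CMPC}}<N_{\text{GCSA-NA}}$ in the regions 1. $z>ts$, $p<\frac{t-1}{s}$, $t\ne1$; 2. $s<t$, $ts-t<z\le\min\{ts,\,t(t-1)-1\}$; 3. $z\le ts-t$; 4. $s=1$, $t>z$, $t\ne2$; and for all other values of $s,t,z$, $N_{\text{PolyDot-CMPC}}\ge N_{\text{GCSA-NA}}$.
   Context: $N_{\text{PolyDot-CMPC}}$ is the number of workers needed by the PolyDot-CMPC scheme, given by: with $\theta'=2ts-t$ and $\upsilon'=\max\{ts-2t-s+2,\frac{ts-2t+1}{2}\}$, $N_{\text{PolyDot-CMPC}}=(p+2)ts+\theta'(t-1)+2z-1$ if $ts<z$ or $t=1$; $=2ts+\theta'(t-1)+3z-1$ if $ts-t<z\le ts$, $s,t\ne1$; $=2ts+\theta'(t-1)+2z-1$ if $ts-2t<z\le ts-t$, $s,t\ne1$; $=(t+1)ts+(t-1)(z+t-1)+2z-1$ if $\upsilon'<z\le ts-2t$, $s,t\ne1$; $=\theta't+z$ if $z\le\upsilon'$, $s,t\ne1$; $=t^2+2t+tz-1$ if $s=1$, $t\ge z$, $t\ne1$. $N_{\text{GCSA-NA}}=2st^2+2z-1$ is the number of workers of the GCSA-NA baseline with a single batch. Here $s,t$ are the numbers of row/column partitions and $z$ the number of colluding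 workers. *)

theory Defs
  imports Complex_Main
begin

definition p_param :: "nat \<Rightarrow> nat \<Rightarrow> nat \<Rightarrow> int" where
  "p_param s t z =
     (if s = 1 then int t - 1
      else min (\<lfloor>(real z - 1) / (real t * real s - real t)\<rfloor>) (int t - 1))"

definition theta' :: "nat \<Rightarrow> nat \<Rightarrow> int" where
  "theta' s t = 2 * int t * int s - int t"

definition upsilon' :: "nat \<Rightarrow> nat \<Rightarrow> real" where
  "upsilon' s t = max (real t * real s - 2 * real t - real s + 2)
                      ((real t * real s - 2 * real t + 1) / 2)"

definition N_PolyDot :: "nat \<Rightarrow> nat \<Rightarrow> nat \<Rightarrow> int" where
  "N_PolyDot s t z =
    (let ts = int t * int s; T = int t; S = int s; Z = int z; th = theta' s t in
     if ts < Z \<or> t = 1 then (p_param s t z + 2) * ts + th * (T - 1) + 2 * Z - 1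
     else if s = 1 then T^2 + 2 * T + T * Z - 1
     else if ts - T < Z \<and> Z \<le> ts then 2 * ts + th * (T - 1) + 3 * Z - 1
     else if ts - 2 * T < Z \<and> Z \<le> ts - T then 2 * ts + th * (T - 1) + 2 * Z - 1
     else if upsilon' s t < real z \<and> Z \<le> ts - 2 * T
       then (T + 1) * ts + (T - 1) * (Z + T - 1) + 2 * Z - 1
     else th * T + Z)"

text \<open>Number of workers of GCSA-NA with a single batch.\<close>
definition N_GCSA_NA :: "nat \<Rightarrow> nat \<Rightarrow> nat \<Rightarrow> int" where
  "N_GCSA_NA s t z = 2 * int s * int t ^ 2 + 2 * int z - 1"

end

theory Submission
  imports Defs
begin

lemma br1:
  fixes s t :: nat and p z :: int
  assumes "s \<ge> 1" "t \<ge> 1"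
  shows "(p + 2) * (int t * int s) + theta' s t * (int t - 1) + 2 * z - 1 < 2 * int s * int t ^ 2 + 2 * z - 1
         \<longleftrightarrow> real_of_int p < (real t - 1) / real s"
proof -
  have e: "(p + 2) * (int t * int s) + theta' s t * (int t - 1) + 2 * z - 1 - (2 * int s * int t ^ 2 + 2 * z - 1)
     = int t * (p * int s - (int t - 1))"
    unfolding theta'_def by (simp add: algebra_simps power2_eq_square)
  have "real_of_int p < (real t - 1) / real s \<longleftrightarrow> real_of_int p * real s < real t - 1"
    using assms by (simp add: pos_less_divide_eq)
  also have "\<dots> \<longleftrightarrow> p * int s < int t - 1"
  proof -
    have "real_of_int p * real s < real t - 1 \<longleftrightarrow> real_of_int (p * int s) < real_of_int (int t - 1)" by simp
    thus ?thesis by (simp only: of_int_less_iff)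
  qed
  also have "\<dots> \<longleftrightarrow> int t * (p * int s - (int t - 1)) < 0"
    using assms by (simp add: mult_less_0_iff)
  finally show ?thesis using e by linarith
qed

theorem lemma3:
  fixes s t z :: nat
  assumes "s \<ge> 1" and "t \<ge> 1" and "z \<ge> 1"
  shows "N_PolyDot s t z < N_GCSA_NA s t z \<longleftrightarrow>
           ((z > t * s \<and> real_of_int (p_param s t z) < (real t - 1) / real s \<and> t \<noteq> 1)
          \<or> (s \<noteq> 1 \<and> t \<noteq> 1 \<and> s < t \<and> int t * int s - int t < int z \<and> int z \<le> min (int t * int s) (int t * (int t - 1) - 1))
          \<or> (s \<noteq> 1 \<and> t \<noteq> 1 \<and> int z \<le> int t * int s - int t)
          \<or> (s = 1 \<and> t > z \<and> t \<noteq> 2))"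
proof -
  let ?T = "int t" and ?S = "int s" and ?Z = "int z"
  have G: "N_GCSA_NA s t z = 2 * ?S * ?T ^ 2 + 2 * ?Z - 1" unfolding N_GCSA_NA_def by simp
  have th: "theta' s t = 2 * ?T * ?S - ?T" unfolding theta'_def by simp
  show ?thesis
  proof (cases "?T * ?S < ?Z \<or> t = 1")
    case True
    have N: "N_PolyDot s t z = (p_param s t z + 2) * (?T * ?S) + theta' s t * (?T - 1) + 2 * ?Z - 1"
      using True unfolding N_PolyDot_def Let_def by simp
    have E: "N_PolyDot s t z < N_GCSA_NA s t z \<longleftrightarrow> real_of_int (p_param s t z) < (real t - 1) / real s"
      unfolding N G using br1 assms by blast
    show ?thesis
    proof (cases "t = 1")
      case t1: True
      have "p_param s t z \<ge> 0"
        unfolding p_param_def using t1 assms by (auto simp: divide_nonneg_nonneg)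
      hence "\<not> real_of_int (p_param s t z) < (real t - 1) / real s" using t1 by simp
      then show ?thesis using E t1 assms by auto
    next
      case False
      hence "z > t * s" using True by (metis of_nat_less_iff of_nat_mult)
      moreover have "\<not> (int z \<le> int t * int s)" using True False by auto
      ultimately show ?thesis using E False by auto
    qed
  next
    case nT: False
    hence t2: "t \<ge> 2" and zle: "?Z \<le> ?T * ?S" using assms by auto
    have nz: "\<not> z > t * s" using zle by (metis not_less of_nat_le_iff of_nat_mult)
    show ?thesis
    proof (cases "s = 1")
      case True
      have N: "N_PolyDot s t z = ?T^2 + 2 * ?T + ?T * ?Z - 1"
        using True nT unfolding N_PolyDot_def Let_def by simp
      have "N_PolyDot s t z - N_GCSA_NA s t z = (?T - 2) * (?Z - ?T)"
        unfolding N G using True by (simp add: algebra_simps power2_eq_square)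
      moreover have "(?T - 2) * (?Z - ?T) < 0 \<longleftrightarrow> t > z \<and> t \<noteq> 2"
        using t2 zle True by (auto simp: mult_less_0_iff)
      ultimately show ?thesis using nz True by auto
    next
      case sn: False
      hence s2: "s \<ge> 2" using assms by auto
      have ts: "?T * ?S \<ge> 2 * ?T" proof -
        have "int t * 2 \<le> int t * int s" using s2 by (intro mult_left_mono) auto
        thus ?thesis by simp
      qed
      show ?thesis
      proof (cases "?T * ?S - ?T < ?Z")
        case True
        have N: "N_PolyDot s t z = 2 * (?T * ?S) + theta' s t * (?T - 1) + 3 * ?Z - 1"
          using True nT sn zle unfolding N_PolyDot_def Let_def by simp
        have D: "N_PolyDot s t z - N_GCSA_NA s t z = ?Z - ?T * (?T - 1)"
          unfolding N G th by (simp add: algebra_simps power2_eq_square)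
        have "s < t" if "?Z \<le> ?T * (?T - 1) - 1"
        proof (rule ccontr)
          assume "\<not> s < t" hence "?S \<ge> ?T" by simp
          hence "?T * ?S \<ge> ?T * ?T" by (intro mult_left_mono) auto
          moreover have "?T * (?T - 1) = ?T * ?T - ?T" by (simp add: algebra_simps)
          ultimately show False using that True by linarith
        qed
        then show ?thesis using D True zle nz sn nT by auto
      next
        case F3: False
        show ?thesis
        proof (cases "?T * ?S - 2 * ?T < ?Z")
          case True
          have N: "N_PolyDot s t z = 2 * (?T * ?S) + theta' s t * (?T - 1) + 2 * ?Z - 1"
            using True F3 nT sn zle unfolding N_PolyDot_def Let_def by simp
          have D: "N_PolyDot s t z - N_GCSA_NA s t z = - ?T * (?T - 1)"
            unfolding N G th by (simp add: algebra_simps power2_eq_square)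
          have "?T * (?T - 1) > 0" using t2 by (intro mult_pos_pos) auto
          then show ?thesis using D F3 sn nT by auto
        next
          case F4: False
          have lhs: "N_PolyDot s t z < N_GCSA_NA s t z"
          proof (cases "upsilon' s t < real z")
            case True
            have N: "N_PolyDot s t z = (?T + 1) * (?T * ?S) + (?T - 1) * (?Z + ?T - 1) + 2 * ?Z - 1"
              using True F3 F4 nT sn zle unfolding N_PolyDot_def Let_def by simp
            have "(?T - 1) * (?Z + ?T - 1) \<le> (?T - 1) * (?T * ?S - ?T - 1)"
              using F4 t2 by (intro mult_left_mono) auto
            moreover have "N_PolyDot s t z - N_GCSA_NA s t z
               = ?T * ?S + (?T - 1) * (?Z + ?T - 1) - ?T * ?T * ?S"
              unfolding N G by (simp add: algebra_simps power2_eq_square)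
            moreover have "(?T - 1) * (?T * ?S - ?T - 1) = ?T * ?T * ?S - ?T * ?T - ?T * ?S + 1"
              by (simp add: algebra_simps)
            moreover have "?T * ?T \<ge> 4" using t2
              proof -
              have "?T * ?T \<ge> 2 * 2" using t2 by (intro mult_mono) auto
              thus ?thesis by simp
            qed
            ultimately show ?thesis by linarith
          next
            case False
            have N: "N_PolyDot s t z = theta' s t * ?T + ?Z"
              using False F3 F4 nT sn zle unfolding N_PolyDot_def Let_def by simp
            have "N_PolyDot s t z - N_GCSA_NA s t z = - ?T * ?T - ?Z + 1"
              unfolding N G th by (simp add: algebra_simps power2_eq_square)
            moreover have "?T * ?T > 0" using t2 by (intro mult_pos_pos) auto
            moreover have "?Z \<ge> 1" using assms by simp
            ultimately show ?thesis by linarith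
          qed
          then show ?thesis using F3 F4 sn nT by auto
        qed
      qed
    qed
  qed
qed

end
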